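(* Let $\mathcal{A}$ be a finite alphabet with $\#\mathcal{A}\ge 2$ and let $\mathbf{p}$ be an irreducible pair on $\mathcal{A}$. Then the labeled Rauzy class of $\mathbf{p}$ contains a piece-wise order reversing pair.
   Context: Let $n=\#\mathcal{A}$. A pair on $\mathcal{A}$ is $\mathbf{p}=(p_0,p_1)$ with $p_0,p_1:\mathcal{A}\to\{1,\dots,n\}$ bijections ($p_\varepsilon$ is "row $\varepsilon$"; row $\varepsilon$ lists the letters $p_\varepsilon^{-1}(1),\dots,p_\varepsilon^{-1}(n)$ in order). $\mathbf{p}$ is irreducible if $p_0^{-1}\{1,\dots,k\}\neq p_1^{-1}\{1,\dots,k\}$ for every $1\le k<n$. For irreducible $\mathbf{p}$ and $\varepsilon\in\{0,1\}$, the Rauzy move of type $\varepsilon$ gives $\varepsilon\mathbf{p}=(p_0',p_1')$ with $p'_\varepsilon=p_\varepsilon$ and, writing $z=p_\varepsilon^{-1}(n)$: $p'_{1-\varepsilon}(b)=p_{1-\varepsilon}(b)$ if $p_{1-\varepsilon}(b)\le p_{1-\varepsilon}(z)$; $p'_{1-\varepsilon}(b)=p_{1-\varepsilon}(b)+1$ if $p_{1-\varepsilon}(z)<p_{1-\varepsilon}(b)<n$; $p'_{1-\varepsilon}(b)=p_{1-\varepsilon}(z)+1$ if $p_{1-\varepsilon}(b)=n$. These moves are bijections of the set of irreducible pairs. The labeled Rauzy class of $\mathbf{p}$ is the smallest set of irreducible pairs containing $\mathbf{p}$ and closed under both Rauzy moves (equivalently, the set of pairs reachable from $\mathbf{p}$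 by sequences of Rauzy moves). A pair is standard if $p_0^{-1}(1)=p_1^{-1}(n)$ and $p_1^{-1}(1)=p_0^{-1}(n)$. A standard pair $\mathbf{p}$ is piece-wise order reversing if there are integers $2=k_0<k_1<\dots<k_\ell=n$ such that for each $1\le i\le\ell$, $p_0^{-1}\{k_{i-1},\dots,k_i-1\}=p_1^{-1}\{k_{i-1},\dots,k_i-1\}$, and every $b$ with $k_{i-1}\le p_0(b)<k_i$ satisfies $p_0(b)+p_1(b)=k_{i-1}+k_i-1$. *)

theory Defs
  imports Main "HOL-Library.Cardinality"
begin

text \<open>Alphabet: a finite type 'a, n = CARD('a). A pair is (p0, p1) with
  p0, p1 : 'a -> {1..n} bijections.  Row eps is selected by a bool
  (False = row 0, True = row 1).\<close>

type_synonym 'a pair = "('a \<Rightarrow> nat) \<times> ('a \<Rightarrow> nat)"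

definition is_pair :: "('a::finite) pair \<Rightarrow> bool" where
  "is_pair p \<longleftrightarrow> bij_betw (fst p) UNIV {1..CARD('a)} \<and> bij_betw (snd p) UNIV {1..CARD('a)}"

definition irreducible :: "('a::finite) pair \<Rightarrow> bool" where
  "irreducible p \<longleftrightarrow> is_pair p \<and>
     (\<forall>k. 1 \<le> k \<and> k < CARD('a) \<longrightarrow> fst p -` {1..k} \<noteq> snd p -` {1..k})"

text \<open>Rauzy move of type e: row e is kept, the other row is modified.\<close>
definition rauzy_row :: "('a::finite \<Rightarrow> nat) \<Rightarrow> ('a \<Rightarrow> nat) \<Rightarrow> ('a \<Rightarrow> nat)" where
  "rauzy_row pe q = (let n = CARD('a); z = inv pe n in
     (\<lambda>b. if q b \<le> q z then q b
          else if q b < n then q b + 1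
          else q z + 1))"

definition rauzy_move :: "bool \<Rightarrow> ('a::finite) pair \<Rightarrow> 'a pair" where
  "rauzy_move e p = (if e then (rauzy_row (snd p) (fst p), snd p)
                     else (fst p, rauzy_row (fst p) (snd p)))"

inductive_set rauzy_class :: "('a::finite) pair \<Rightarrow> 'a pair set" for p where
  base: "p \<in> rauzy_class p"
| step: "q \<in> rauzy_class p \<Longrightarrow> rauzy_move e q \<in> rauzy_class p"

definition standard :: "('a::finite) pair \<Rightarrow> bool" where
  "standard p \<longleftrightarrow> inv (fst p) 1 = inv (snd p) CARD('a) \<and> inv (snd p) 1 = inv (fst p) CARD('a)"

definition piecewise_order_reversing :: "('a::finite) pair \<Rightarrow> bool" where
  "piecewise_order_reversing p \<longleftrightarrow> standard p \<and>
     (\<exists>l (k :: nat \<Rightarrow> nat). k 0 = 2 \<and> k l = CARD('a) \<and> (\<forall>i<l. k i < k (Suc i)) \<and>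
        (\<forall>i. 1 \<le> i \<and> i \<le> l \<longrightarrow>
           fst p -` {k (i-1)..<k i} = snd p -` {k (i-1)..<k i} \<and>
           (\<forall>b. k (i-1) \<le> fst p b \<and> fst p b < k i \<longrightarrow> fst p b + snd p b = k (i-1) + k i - 1)))"

end

theory Submission
  imports Defs "HOL-Library.Multiset"
begin

section \<open>Indices in lists\<close>

fun idx :: "'a list \<Rightarrow> 'a \<Rightarrow> nat" where
  "idx [] b = 0"
| "idx (x # xs) b = (if x = b then 0 else Suc (idx xs b))"

lemma idx_append: "idx (xs @ ys) b = (if b \<in> set xs then idx xs b else length xs + idx ys b)"
  by (induction xs) auto

lemma idx_less: "b \<in> set xs \<Longrightarrow> idx xs b < length xs"
  by (induction xs) auto

lemma nth_idx: "b \<in> set xs \<Longrightarrow> xs ! idx xs b = b"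
  by (induction xs) auto

lemma idx_nth: "distinct xs \<Longrightarrow> i < length xs \<Longrightarrow> idx xs (xs ! i) = i"
proof (induction xs arbitrary: i)
  case Nil then show ?case by simp
next
  case (Cons a xs)
  then show ?case by (cases i) (auto simp: nth_mem)
qed

lemma idx_rev: "distinct xs \<Longrightarrow> b \<in> set xs \<Longrightarrow> idx (rev xs) b = length xs - 1 - idx xs b"
proof (induction xs)
  case Nil then show ?case by simp
next
  case (Cons a xs)
  show ?case
  proof (cases "a = b")
    case True
    then have "b \<notin> set xs" using Cons by auto
    then show ?thesis using True by (simp add: idx_append)
  next
    case False
    then have "b \<in> set xs" using Cons by auto
    moreover have "idx xs b < length xs" using idx_less[OF \<open>b \<in> set xs\<close>] .
    ultimately show ?thesis using Cons False by (simp add: idx_append)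
  qed
qed

definition pos :: "'a list \<Rightarrow> 'a \<Rightarrow> nat" where
  "pos L b = Suc (idx L b)"

definition wfl :: "('a::finite) list \<Rightarrow> bool" where
  "wfl L \<longleftrightarrow> distinct L \<and> set L = UNIV"

lemma wfl_length: "wfl (L :: ('a::finite) list) \<Longrightarrow> length L = CARD('a)"
  unfolding wfl_def using distinct_card by fastforce

lemma wfl_perm: "wfl X \<Longrightarrow> mset X = mset Y \<Longrightarrow> wfl Y"
  unfolding wfl_def by (metis mset_eq_imp_distinct_iff mset_eq_setD)

lemma pos_inj: "wfl L \<Longrightarrow> inj (pos L)"
  unfolding wfl_def pos_def inj_def by (metis UNIV_I nat.inject nth_idx)

lemma inv_pos: "wfl L \<Longrightarrow> 1 \<le> i \<Longrightarrow> i \<le> length L \<Longrightarrow> inv (pos L) i = L ! (i - 1)"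
proof -
  assume w: "wfl L" and i: "1 \<le> i" "i \<le> length L"
  have "pos L (L ! (i - 1)) = i" using w i unfolding pos_def wfl_def
    by (simp add: idx_nth)
  then show ?thesis using inv_f_eq[OF pos_inj[OF w]] by blast
qed

lemma inv_pos_last: "wfl L \<Longrightarrow> L \<noteq> [] \<Longrightarrow> inv (pos L) (length L) = last L"
  using inv_pos[of L "length L"] by (simp add: last_conv_nth Suc_leI)

lemma pos_preimage:
  assumes "wfl L" "k \<le> length L"
  shows "pos L -` {1..k} = set (take k L)"
proof -
  have "b \<in> set (take k L) \<longleftrightarrow> idx L b < k" for b
  proof -
    have e: "idx L b = (if b \<in> set (take k L) then idx (take k L) b else k + idx (drop k L) b)"
      using idx_append[of "take k L" "drop k L" b] assms(2) by (simp add: min_def)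
    show ?thesis
    proof (cases "b \<in> set (take k L)")
      case True
      then show ?thesis using e idx_less[OF True] assms(2) by simp
    next
      case False
      then show ?thesis using e by simp
    qed
  qed
  note h = this
  show ?thesis
  proof (rule set_eqI)
    fix b
    show "b \<in> pos L -` {1..k} \<longleftrightarrow> b \<in> set (take k L)"
      using h[of b] unfolding pos_def by (simp add: Suc_le_eq)
  qed
qed

section \<open>The Rauzy step on lists\<close>

lemma row_step:
  assumes wK: "wfl K" and wL: "wfl L" and K: "K \<noteq> []" "last K = z"
    and L: "L = u @ z # v @ [y]"
  shows "rauzy_row (pos K) (pos L) = pos (u @ z # y # v)"
proof -
  have nK: "length K = CARD('a)" using wfl_length[OF wK] .
  have nL: "length L = CARD('a)" using wfl_length[OF wL] .
  have zinv: "inv (pos K) CARD('a) = z" using inv_pos_last[OF wK K(1)] K nK by simp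
  have dL: "distinct (u @ z # v @ [y])" using wL L unfolding wfl_def by simp
  have allL: "b \<in> set u \<or> b = z \<or> b = y \<or> b \<in> set v" for b
    using wL L unfolding wfl_def by auto
  have qz: "pos L z = Suc (length u)" using dL L unfolding pos_def by (simp add: idx_append)
  show ?thesis
    unfolding rauzy_row_def Let_def zinv
  proof (rule ext)
    fix b
    consider "b \<in> set u" | "b = z" | "b = y" | "b \<in> set v" using allL by blast
    then show "(if pos L b \<le> pos L z then pos L b
          else if pos L b < CARD('a) then pos L b + 1 else pos L z + 1) = pos (u @ z # y # v) b"
    proof cases
      case 1
      then show ?thesis using dL L idx_less[OF 1] unfolding pos_def by (auto simp: idx_append)
    next
      case 2
      then show ?thesis using dL L unfolding pos_def by (auto simp: idx_append)
    next
      case 3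
      then show ?thesis using dL L nL unfolding pos_def by (auto simp: idx_append)
    next
      case 4
      then show ?thesis using dL L nL idx_less[OF 4] unfolding pos_def by (auto simp: idx_append)
    qed
  qed
qed


definition R :: "('a::finite) pair \<Rightarrow> 'a list \<Rightarrow> 'a list \<Rightarrow> bool" where
  "R p K L \<longleftrightarrow> (pos K, pos L) \<in> rauzy_class p"

lemma wfl_rs: "wfl (u @ z # v @ [y]) \<Longrightarrow> wfl (u @ z # y # v)"
  by (erule wfl_perm) simp

lemma R_step0:
  assumes "R p K L" "wfl K" "wfl L" "K \<noteq> []" "last K = z" "L = u @ z # v @ [y]"
  shows "R p K (u @ z # y # v)"
proof -
  have "rauzy_move False (pos K, pos L) \<in> rauzy_class p"
    using assms(1) unfolding R_def by (rule rauzy_class.step)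
  then show ?thesis unfolding R_def rauzy_move_def using row_step[OF assms(2-6)] by simp
qed

lemma R_step1:
  assumes "R p L K" "wfl K" "wfl L" "K \<noteq> []" "last K = z" "L = u @ z # v @ [y]"
  shows "R p (u @ z # y # v) K"
proof -
  have "rauzy_move True (pos L, pos K) \<in> rauzy_class p"
    using assms(1) unfolding R_def by (rule rauzy_class.step)
  then show ?thesis unfolding R_def rauzy_move_def using row_step[OF assms(2-6)] by simp
qed

lemma rot0:
  assumes "R p K (u @ z # v1 @ v2)" "wfl K" "wfl (u @ z # v1 @ v2)" "K \<noteq> []" "last K = z"
  shows "R p K (u @ z # v2 @ v1)"
  using assms(1,3)
proof (induction v2 arbitrary: v1 rule: rev_induct)
  case Nil
  then show ?case by simp
next
  case (snoc y v2)
  have 1: "R p K (u @ z # y # v1 @ v2)"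
    using R_step0[OF snoc.prems(1) assms(2) snoc.prems(2) assms(4,5), of u "v1 @ v2" y] by simp
  have 2: "wfl (u @ z # (y # v1) @ v2)"
    using wfl_rs[of u z "v1 @ v2" y] snoc.prems(2) by simp
  show ?case using snoc.IH[of "y # v1"] 1 2 by simp
qed

lemma rot1:
  assumes "R p (u @ z # v1 @ v2) K" "wfl K" "wfl (u @ z # v1 @ v2)" "K \<noteq> []" "last K = z"
  shows "R p (u @ z # v2 @ v1) K"
  using assms(1,3)
proof (induction v2 arbitrary: v1 rule: rev_induct)
  case Nil
  then show ?case by simp
next
  case (snoc y v2)
  have 1: "R p (u @ z # y # v1 @ v2) K"
    using R_step1[OF snoc.prems(1) assms(2) snoc.prems(2) assms(4,5), of u "v1 @ v2" y] by simp
  have 2: "wfl (u @ z # (y # v1) @ v2)"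
    using wfl_rs[of u z "v1 @ v2" y] snoc.prems(2) by simp
  show ?case using snoc.IH[of "y # v1"] 1 2 by simp
qed

section \<open>Irreducibility on lists\<close>

definition irrL :: "'a list \<Rightarrow> 'a list \<Rightarrow> bool" where
  "irrL A B \<longleftrightarrow> (\<forall>k. 1 \<le> k \<and> k < length A \<longrightarrow> set (take k A) \<noteq> set (take k B))"

lemma irrL_sym: "irrL A B \<Longrightarrow> length A = length B \<Longrightarrow> irrL B A"
  unfolding irrL_def
proof (intro allI impI)
  fix k assume "\<forall>k. 1 \<le> k \<and> k < length A \<longrightarrow> set (take k A) \<noteq> set (take k B)"
    "length A = length B" "1 \<le> k \<and> k < length B"
  then have "set (take k A) \<noteq> set (take k B)" by simp
  then show "set (take k B) \<noteq> set (take k A)" by (rule not_sym)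
qed

lemma last_notin_take:
  assumes "distinct K" "K \<noteq> []" "k < length K"
  shows "last K \<notin> set (take k K)"
proof -
  have d: "drop k K \<noteq> []" using assms(3) by simp
  have "last (drop k K) = last K" using assms(3) by (rule last_drop)
  then have "last K \<in> set (drop k K)" using last_in_set[OF d] by simp
  moreover have "distinct (take k K @ drop k K)" using assms(1) by simp
  then have "set (take k K) \<inter> set (drop k K) = {}" by (simp only: distinct_append)
  ultimately show ?thesis by blast
qed

lemma irr_rot:
  assumes "wfl K" "wfl (u @ z # v1 @ v2)" "K \<noteq> []" "last K = z" "irrL K (u @ z # v1 @ v2)"
  shows "irrL K (u @ z # v2 @ v1)"
  unfolding irrL_def
proof (intro allI impI)
  fix k assume k: "1 \<le> k \<and> k < length K"
  show "set (take k K) \<noteq> set (take k (u @ z # v2 @ v1))"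
  proof (cases "k \<le> length u")
    case True
    then have "take k (u @ z # v2 @ v1) = take k (u @ z # v1 @ v2)" by simp
    moreover have "set (take k K) \<noteq> set (take k (u @ z # v1 @ v2))"
      using assms(5) k unfolding irrL_def by blast
    ultimately show ?thesis by simp
  next
    case False
    then obtain j where j: "k = length u + Suc j" by (metis add_Suc_right less_iff_Suc_add not_le)
    have "z \<in> set (take k (u @ z # v2 @ v1))" unfolding j by simp
    moreover have "z \<notin> set (take k K)"
      using last_notin_take[of K k] assms k unfolding wfl_def by auto
    ultimately show ?thesis by auto
  qed
qed


lemma wfl_compl: "wfl (X @ Y) \<Longrightarrow> set X = UNIV - set Y"
  unfolding wfl_def by auto

lemma idx_split: "distinct (u @ z # v) \<Longrightarrow> idx (u @ z # v) z = length u"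
  by (simp add: idx_append)

section \<open>Reaching a standard pair\<close>

lemma std_reach:
  fixes p :: "('a::finite) pair"
  assumes n2: "2 \<le> CARD('a)"
  shows "wfl R0 \<Longrightarrow> wfl R1 \<Longrightarrow> irrL R0 R1 \<Longrightarrow> R p R0 R1 \<Longrightarrow>
    \<exists>a c w w'. R p (a # w @ [c]) (c # w' @ [a]) \<and> wfl (a # w @ [c]) \<and> wfl (c # w' @ [a])"
proof (induction "idx R1 (last R0)" arbitrary: R0 R1 rule: less_induct)
  case less
  have w0: "wfl R0" and w1: "wfl R1" and irr: "irrL R0 R1" and Rp: "R p R0 R1" using less.prems by auto
  have l0: "length R0 = CARD('a)" using wfl_length[OF w0] .
  have l1: "length R1 = CARD('a)" using wfl_length[OF w1] .
  have d0: "distinct R0" and s0: "set R0 = UNIV" using w0 unfolding wfl_def by auto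
  have d1: "distinct R1" and s1: "set R1 = UNIV" using w1 unfolding wfl_def by auto
  have R0ne: "R0 \<noteq> []" using l0 n2 by auto
  define z0 where "z0 = last R0"
  have zl: "last R0 = z0" unfolding z0_def ..
  define a where "a = hd R0"
  define c where "c = hd R1"
  obtain t where R0t: "R0 = a # t" using R0ne unfolding a_def by (cases R0) auto
  have tne: "t \<noteq> []" using R0t l0 n2 by auto
  have z0t: "z0 \<in> set t" unfolding z0_def R0t using tne by simp
  have at: "a \<notin> set t" using d0 R0t by simp
  have az0: "a \<noteq> z0" using z0t at by auto
  have "z0 \<in> set R1" using s1 by simp
  then obtain u v where R1uv: "R1 = u @ z0 # v" by (meson split_list)
  have du: "distinct (u @ z0 # v)" using d1 R1uv by simp
  have m: "idx R1 (last R0) = length u" using idx_split[OF du] R1uv z0_def by simp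
  have vne: "v \<noteq> []"
  proof
    assume "v = []"
    then have "set u = UNIV - {z0}" using wfl_compl[of u "[z0]"] w1 R1uv by simp
    moreover have "R0 = butlast R0 @ [z0]" using R0ne z0_def by simp
    then have "set (butlast R0) = UNIV - {z0}" using wfl_compl[of "butlast R0" "[z0]"] w0 by simp
    moreover have "take (CARD('a) - 1) R0 = butlast R0" using l0 by (simp add: butlast_conv_take)
    moreover have "take (CARD('a) - 1) R1 = u" using R1uv l1 \<open>v = []\<close> by simp
    moreover have "set (take (CARD('a) - 1) R0) \<noteq> set (take (CARD('a) - 1) R1)"
      using irr n2 l0 unfolding irrL_def by simp
    ultimately show False by simp
  qed
  have ac: "a \<noteq> c"
  proof
    assume "a = c"
    have "take 1 R0 = [a]" using R0t by simp
    moreover have "take 1 R1 = [c]" unfolding c_def using l1 n2 by (cases R1) auto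
    ultimately show False using irr n2 l0 \<open>a = c\<close> unfolding irrL_def by auto
  qed
  have hd1: "hd (u @ z0 # xs) = c" for xs
    unfolding c_def R1uv by (cases u) auto
  show ?case
  proof (cases "a \<in> set v")
    case True
    then obtain v1 v2 where v: "v = v1 @ a # v2" by (meson split_list)
    have R1a: "R1 = u @ z0 # (v1 @ [a]) @ v2" using R1uv v by simp
    define R1' where "R1' = u @ z0 # v2 @ v1 @ [a]"
    have P1: "R p R0 (u @ z0 # (v1 @ [a]) @ v2)" using Rp by (simp only: R1a)
    have P2: "wfl (u @ z0 # (v1 @ [a]) @ v2)" using w1 by (simp only: R1a)
    have Rp1: "R p R0 R1'" unfolding R1'_def
      by (rule rot0[of p R0 u z0 "v1 @ [a]" v2, OF P1 w0 P2 R0ne zl])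
    have w1': "wfl R1'" using P2 unfolding R1'_def by (rule wfl_perm) simp
    have "c \<in> set (a # t)" using s0 R0t by simp
    then have "c \<in> set t" using ac by simp
    then obtain t1 t2 where t: "t = t1 @ c # t2" by (meson split_list)
    have R0a: "R0 = [] @ a # (t1 @ [c]) @ t2" using R0t t by simp
    have R1'ne: "R1' \<noteq> []" "last R1' = a" unfolding R1'_def by auto
    have P3: "R p ([] @ a # (t1 @ [c]) @ t2) R1'" using Rp1 by (simp only: R0a)
    have P4: "wfl ([] @ a # (t1 @ [c]) @ t2)" using w0 by (simp only: R0a)
    have Rp2: "R p ([] @ a # t2 @ (t1 @ [c])) R1'"
      by (rule rot1[of p "[]" a "t1 @ [c]" t2 R1', OF P3 w1' P4 R1'ne])
    have w0': "wfl (a # (t2 @ t1) @ [c])" using P4 by (rule wfl_perm) simp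
    obtain w' where R1'w: "R1' = c # w' @ [a]"
    proof -
      define X where "X = u @ z0 # v2 @ v1"
      have hX: "hd X = c" unfolding X_def by (rule hd1)
      have "X \<noteq> []" unfolding X_def by simp
      then obtain y ys where X: "X = y # ys" by (cases X) auto
      have "R1' = X @ [a]" unfolding R1'_def X_def by simp
      then have "R1' = c # ys @ [a]" using X hX by simp
      then show ?thesis using that by blast
    qed
    show ?thesis
      using Rp2 w0' w1' R1'w by (intro exI[of _ a] exI[of _ c] exI[of _ "t2 @ t1"] exI[of _ w']) simp
  next
    case False
    have "a \<in> set (u @ z0 # v)" using s1 R1uv by simp
    then have au: "a \<in> set u" using az0 False by simp
    obtain z1 where z1: "z1 \<in> set v" "\<And>x. x \<in> set v \<Longrightarrow> idx R0 z1 \<le> idx R0 x"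
      using ex_has_least_nat[of "\<lambda>x. x \<in> set v" "hd v" "idx R0"] vne by auto
    obtain v1 v2 where v: "v = v1 @ z1 # v2" using z1(1) by (meson split_list)
    have R1a: "R1 = u @ z0 # (v1 @ [z1]) @ v2" using R1uv v by simp
    define R1' where "R1' = u @ z0 # v2 @ v1 @ [z1]"
    have P1: "R p R0 (u @ z0 # (v1 @ [z1]) @ v2)" using Rp by (simp only: R1a)
    have P2: "wfl (u @ z0 # (v1 @ [z1]) @ v2)" using w1 by (simp only: R1a)
    have P2': "irrL R0 (u @ z0 # (v1 @ [z1]) @ v2)" using irr by (simp only: R1a)
    have Rp1: "R p R0 R1'" unfolding R1'_def
      by (rule rot0[of p R0 u z0 "v1 @ [z1]" v2, OF P1 w0 P2 R0ne zl])
    have w1': "wfl R1'" using P2 unfolding R1'_def by (rule wfl_perm) simp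
    have irr1: "irrL R0 R1'" unfolding R1'_def
      by (rule irr_rot[of R0 u z0 "v1 @ [z1]" v2, OF w0 P2 R0ne zl P2'])
    have z0v: "z0 \<notin> set v" using du by simp
    have "z1 \<in> set R0" using s0 by simp
    then obtain s t' where R0s: "R0 = s @ z1 # t'" by (meson split_list)
    have ds: "distinct (s @ z1 # t')" using d0 R0s by simp
    have z1z0: "z1 \<noteq> z0" using z0v z1(1) by auto
    have t'ne: "t' \<noteq> []" using z1z0 R0s z0_def by auto
    have ex: "\<exists>g\<in>set t'. g \<notin> set v \<and> g \<noteq> z0"
    proof (rule ccontr)
      assume H: "\<not> ?thesis"
      have z0t': "z0 \<in> set t'" using t'ne R0s z0_def by simp
      have "set (z1 # t') = set (z0 # v)"
      proof
        show "set (z1 # t') \<subseteq> set (z0 # v)" using H z1(1) by auto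
      next
        show "set (z0 # v) \<subseteq> set (z1 # t')"
        proof
          fix x assume x: "x \<in> set (z0 # v)"
          show "x \<in> set (z1 # t')"
          proof (cases "x = z0")
            case True then show ?thesis using z0t' by simp
          next
            case False
            then have xv: "x \<in> set v" using x by simp
            have "x \<notin> set s"
            proof
              assume xs: "x \<in> set s"
              have "idx R0 x = idx s x" unfolding R0s using xs by (simp add: idx_append)
              moreover have "idx R0 z1 = length s" unfolding R0s using idx_split[OF ds] .
              ultimately show False using z1(2)[OF xv] idx_less[OF xs] by simp
            qed
            moreover have "x \<in> set (s @ z1 # t')" using s0 R0s by simp
            ultimately show ?thesis by simp
          qed
        qed
      qed
      then have ssu: "set s = set u"
        using wfl_compl[of s "z1 # t'"] wfl_compl[of u "z0 # v"] w0 w1 R0s R1uv by simp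
      have "distinct s" "distinct u" using ds du by auto
      then have ls: "length s = length u" using ssu distinct_card by metis
      moreover have "1 \<le> length u" using au by (cases u) auto
      moreover have "length u < CARD('a)" using l1 R1uv by simp
      ultimately have "set (take (length u) R0) \<noteq> set (take (length u) R1)"
        using irr l0 unfolding irrL_def by simp
      moreover have "take (length u) R0 = s" using ls R0s by simp
      moreover have "take (length u) R1 = u" using R1uv by simp
      ultimately show False using ssu by simp
    qed
    then obtain g where g: "g \<in> set t'" "g \<notin> set v" "g \<noteq> z0" by blast
    then obtain t1 t2 where t': "t' = t1 @ g # t2" by (meson split_list)
    have R0a: "R0 = s @ z1 # (t1 @ [g]) @ t2" using R0s t' by simp
    define R0' where "R0' = s @ z1 # t2 @ t1 @ [g]"
    have R1'ne: "R1' \<noteq> []" "last R1' = z1" unfolding R1'_def by auto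
    have P3: "R p (s @ z1 # (t1 @ [g]) @ t2) R1'" using Rp1 by (simp only: R0a)
    have P4: "wfl (s @ z1 # (t1 @ [g]) @ t2)" using w0 by (simp only: R0a)
    have Rp2: "R p R0' R1'" unfolding R0'_def
      by (rule rot1[of p s z1 "t1 @ [g]" t2 R1', OF P3 w1' P4 R1'ne])
    have w0': "wfl R0'" using P4 unfolding R0'_def by (rule wfl_perm) simp
    have "irrL R1' R0" using irrL_sym[OF irr1] l0 wfl_length[OF w1'] by simp
    then have P5: "irrL R1' (s @ z1 # (t1 @ [g]) @ t2)" by (simp only: R0a)
    have "irrL R1' R0'" unfolding R0'_def
      by (rule irr_rot[of R1' s z1 "t1 @ [g]" t2, OF w1' P4 R1'ne P5])
    moreover have "length R1' = length R0'" using wfl_length[OF w1'] wfl_length[OF w0'] by simp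
    ultimately have irr2: "irrL R0' R1'" by (rule irrL_sym)
    have "g \<in> set (u @ z0 # v)" using s1 R1uv by simp
    then have gu: "g \<in> set u" using g by simp
    have "last R0' = g" unfolding R0'_def by simp
    then have "idx R1' (last R0') = idx u g" unfolding R1'_def using gu by (simp add: idx_append)
    then have "idx R1' (last R0') < idx R1 (last R0)" using idx_less[OF gu] m by simp
    then show ?thesis by (rule less.hyps[OF _ w0' w1' irr2 Rp2])
  qed
qed


section \<open>The block transposition macro on standard pairs\<close>

lemma R_cong: "R p A B \<Longrightarrow> A = A' \<Longrightarrow> B = B' \<Longrightarrow> R p A' B'"
  by simp

lemma Tmacro:
  assumes Rp: "R p (a # w @ [c]) (c # w' @ [a])" and w0: "wfl (a # w @ [c])"
    and w1: "wfl (c # w' @ [a])"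
    and w: "w = A @ x # B @ y # C" and w': "w' = U @ x # V @ y # W"
  shows "R p (a # B @ y # A @ x # C @ [c]) (c # V @ y # U @ x # W @ [a])"
proof -
  define K0 where "K0 = a # w @ [c]"
  define L0 where "L0 = c # w' @ [a]"
  have e1: "L0 = [] @ c # (U @ [x]) @ (V @ y # W @ [a])" unfolding L0_def w' by simp
  have k0: "K0 \<noteq> []" "last K0 = c" unfolding K0_def by auto
  have wK0: "wfl K0" using w0 unfolding K0_def .
  have wL0: "wfl ([] @ c # (U @ [x]) @ (V @ y # W @ [a]))" using w1 e1 unfolding L0_def by simp
  define L1 where "L1 = [] @ c # (V @ y # W @ [a]) @ (U @ [x])"
  have R1: "R p K0 L1" unfolding L1_def
    by (rule rot0[OF _ wK0 wL0 k0]) (use Rp e1 in \<open>simp add: K0_def L0_def\<close>)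
  have wL1: "wfl L1" unfolding L1_def using wL0 by (rule wfl_perm) simp
  have e2: "K0 = (a # A) @ x # (B @ [y]) @ (C @ [c])" unfolding K0_def w by simp
  have wK0': "wfl ((a # A) @ x # (B @ [y]) @ (C @ [c]))" using wK0 e2 by simp
  have l1: "L1 \<noteq> []" "last L1 = x" unfolding L1_def by auto
  define K1 where "K1 = (a # A) @ x # (C @ [c]) @ (B @ [y])"
  have R2: "R p K1 L1" unfolding K1_def
    by (rule rot1[OF _ wL1 wK0' l1]) (use R1 e2 in simp)
  have wK1: "wfl K1" unfolding K1_def using wK0' by (rule wfl_perm) simp
  have e3: "L1 = (c # V) @ y # (W @ [a]) @ (U @ [x])" unfolding L1_def by simp
  have wL1': "wfl ((c # V) @ y # (W @ [a]) @ (U @ [x]))" using wL1 e3 by simp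
  have k1: "K1 \<noteq> []" "last K1 = y" unfolding K1_def by auto
  define L2 where "L2 = (c # V) @ y # (U @ [x]) @ (W @ [a])"
  have R3: "R p K1 L2" unfolding L2_def
    by (rule rot0[OF _ wK1 wL1' k1]) (use R2 e3 in simp)
  have wL2: "wfl L2" unfolding L2_def using wL1' by (rule wfl_perm) simp
  have e4: "K1 = [] @ a # (A @ x # C @ [c]) @ (B @ [y])" unfolding K1_def by simp
  have wK1': "wfl ([] @ a # (A @ x # C @ [c]) @ (B @ [y]))" using wK1 e4 by simp
  have l2: "L2 \<noteq> []" "last L2 = a" unfolding L2_def by auto
  have R4: "R p ([] @ a # (B @ [y]) @ (A @ x # C @ [c])) L2"
    by (rule rot1[OF _ wL2 wK1' l2]) (use R3 e4 in simp)
  show ?thesis using R4 unfolding L2_def by simp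
qed


section \<open>Block transpositions on pairs of words\<close>

inductive Tr :: "'a list \<times> 'a list \<Rightarrow> 'a list \<times> 'a list \<Rightarrow> bool" for s where
  refl: "Tr s s"
| step: "Tr s (A @ x # B @ y # C, U @ x # V @ y # W) \<Longrightarrow> Tr s (B @ y # A @ x # C, V @ y # U @ x # W)"

lemma Tr_move:
  assumes "Tr s t" "fst t = A @ x # B @ y # C" "snd t = U @ x # V @ y # W"
  shows "Tr s (B @ y # A @ x # C, V @ y # U @ x # W)"
proof -
  have "t = (A @ x # B @ y # C, U @ x # V @ y # W)" using assms(2,3) by (cases t) simp
  then show ?thesis using assms(1) Tr.step by metis
qed

lemma Tr_trans: "Tr t u \<Longrightarrow> Tr s t \<Longrightarrow> Tr s u"
  by (induction rule: Tr.induct) (auto intro: Tr.step)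

lemma Tr_mset: "Tr s t \<Longrightarrow> mset (fst t) = mset (fst s) \<and> mset (snd t) = mset (snd s)"
  by (induction rule: Tr.induct) (simp_all add: add_mset_commute ac_simps)

lemma Tr_suffix: "Tr (w, w') t \<Longrightarrow> Tr (w @ S, w' @ S') (fst t @ S, snd t @ S')"
proof (induction rule: Tr.induct)
  case refl
  then show ?case by (simp add: Tr.refl)
next
  case (step A x B y C U V W)
  have "Tr (w @ S, w' @ S') (B @ y # A @ x # (C @ S), V @ y # U @ x # (W @ S'))"
    by (rule Tr_move[OF step.IH]) simp_all
  then show ?case by simp
qed

lemma filter_split:
  "filter P L = xs @ ys \<Longrightarrow> \<exists>us vs. L = us @ vs \<and> filter P us = xs \<and> filter P vs = ys"
proof (induction L arbitrary: xs)
  case Nil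
  then show ?case by simp
next
  case (Cons a L)
  show ?case
  proof (cases "P a")
    case True
    show ?thesis
    proof (cases xs)
      case Nil
      then show ?thesis using Cons.prems by (intro exI[of _ "[]"] exI[of _ "a # L"]) simp
    next
      case (Cons b xs')
      then have "filter P L = xs' @ ys" "b = a" using Cons.prems True by auto
      then obtain us vs where "L = us @ vs" "filter P us = xs'" "filter P vs = ys"
        using Cons.IH by blast
      then show ?thesis using True \<open>b = a\<close> Cons by (intro exI[of _ "a # us"] exI[of _ vs]) simp
    qed
  next
    case False
    then have "filter P L = xs @ ys" using Cons.prems by simp
    then obtain us vs where "L = us @ vs" "filter P us = xs" "filter P vs = ys"
      using Cons.IH by blast
    then show ?thesis using False by (intro exI[of _ "a # us"] exI[of _ vs]) simp
  qed
qed

lemma filter_split_Cons: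
  assumes "filter P L = xs @ x # ys"
  shows "\<exists>us vs. L = us @ x # vs \<and> filter P us = xs \<and> filter P vs = ys"
proof -
  obtain L1 L2 where L: "L = L1 @ L2" "filter P L1 = xs" "filter P L2 = x # ys"
    using filter_split[OF assms] by blast
  obtain us vs where "L2 = us @ x # vs" "\<forall>u\<in>set us. \<not> P u" "xs = xs" "ys = filter P vs"
    using filter_eq_ConsD[OF L(3)] by blast
  moreover have "filter P us = []" using calculation(2) by (simp add: filter_empty_conv)
  ultimately show ?thesis using L by (intro exI[of _ "L1 @ us"] exI[of _ vs]) simp
qed

lemma filter_split3:
  assumes "filter P L = U @ x # V @ y # W"
  shows "\<exists>U' V' W'. L = U' @ x # V' @ y # W' \<and> filter P U' = U \<and> filter P V' = V \<and> filter P W' = W"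
proof -
  obtain us vs where 1: "L = us @ x # vs" "filter P us = U" "filter P vs = V @ y # W"
    using filter_split_Cons[OF assms] by blast
  obtain us2 vs2 where 2: "vs = us2 @ y # vs2" "filter P us2 = V" "filter P vs2 = W"
    using filter_split_Cons[OF 1(3)] by blast
  show ?thesis using 1 2 by (intro exI[of _ us] exI[of _ us2] exI[of _ vs2]) simp
qed

lemma Tr_del:
  assumes "Tr (w0, w0') t" "filter (\<lambda>z. z \<noteq> e) w' = w0'"
  shows "\<exists>v'. Tr (w0 @ [e], w') (fst t @ [e], v') \<and> filter (\<lambda>z. z \<noteq> e) v' = snd t"
  using assms(1)
proof (induction rule: Tr.induct)
  case refl
  then show ?case using assms(2) by (intro exI[of _ w']) (simp add: Tr.refl)
next
  case (step A x B y C U V W)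
  then obtain v' where v': "Tr (w0 @ [e], w') ((A @ x # B @ y # C) @ [e], v')"
    "filter (\<lambda>z. z \<noteq> e) v' = U @ x # V @ y # W" by auto
  obtain U' V' W' where d: "v' = U' @ x # V' @ y # W'" "filter (\<lambda>z. z \<noteq> e) U' = U"
    "filter (\<lambda>z. z \<noteq> e) V' = V" "filter (\<lambda>z. z \<noteq> e) W' = W"
    using filter_split3[OF v'(2)] by blast
  have "x \<in> set (filter (\<lambda>z. z \<noteq> e) v')" "y \<in> set (filter (\<lambda>z. z \<noteq> e) v')"
    using v'(2) by auto
  then have "x \<noteq> e" "y \<noteq> e" by auto
  have "Tr (w0 @ [e], w') (B @ y # A @ x # (C @ [e]), V' @ y # U' @ x # W')"
    by (rule Tr_move[OF v'(1)]) (simp_all add: d(1))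
  then show ?case using d \<open>x \<noteq> e\<close> \<open>y \<noteq> e\<close>
    by (intro exI[of _ "V' @ y # U' @ x # W'"]) simp
qed

lemma Tr_lift:
  assumes "Tr (w, w') t" "R p (a # w @ [c]) (c # w' @ [a])" "wfl (a # w @ [c])" "wfl (c # w' @ [a])"
  shows "R p (a # fst t @ [c]) (c # snd t @ [a]) \<and> wfl (a # fst t @ [c]) \<and> wfl (c # snd t @ [a])"
  using assms(1)
proof (induction rule: Tr.induct)
  case refl
  then show ?case using assms by simp
next
  case (step A x B y C U V W)
  then have h: "R p (a # (A @ x # B @ y # C) @ [c]) (c # (U @ x # V @ y # W) @ [a])"
    "wfl (a # (A @ x # B @ y # C) @ [c])" "wfl (c # (U @ x # V @ y # W) @ [a])" by auto
  have "R p (a # B @ y # A @ x # C @ [c]) (c # V @ y # U @ x # W @ [a])"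
    by (rule Tmacro[OF h HOL.refl HOL.refl])
  moreover have "wfl (a # (B @ y # A @ x # C) @ [c])" using h(2) by (rule wfl_perm) (simp add: ac_simps)
  moreover have "wfl (c # (V @ y # U @ x # W) @ [a])" using h(3) by (rule wfl_perm) (simp add: ac_simps)
  ultimately show ?case by simp
qed


lemma good_step:
  assumes d: "distinct (P0 @ L @ [e])" and dv: "distinct v'"
    and sv: "set v' = set (P0 @ L @ [e])"
    and f: "filter (\<lambda>z. z \<noteq> e) v' = P0' @ rev L" and Lne: "L \<noteq> []"
    and sP: "set P0 = set P0'"
  shows "\<exists>P P' S. S \<noteq> [] \<and> Tr (P0 @ L @ [e], v') (P @ S, P' @ rev S)"
proof -
  define s where "s = (P0 @ L @ [e], v')"
  have "e \<in> set v'" using sv by simp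
  then obtain X Y where v': "v' = X @ e # Y" by (meson split_list)
  have "e \<notin> set X" "e \<notin> set Y" using dv v' by auto
  moreover have "filter (\<lambda>z. z \<noteq> e) X = X" "filter (\<lambda>z. z \<noteq> e) Y = Y"
    unfolding filter_id_conv using calculation by auto
  ultimately have "filter (\<lambda>z. z \<noteq> e) v' = X @ Y" unfolding v' by simp
  then have XY: "X @ Y = P0' @ rev L" using f by simp
  then obtain us where us: "(X = P0' @ us \<and> us @ Y = rev L) \<or> (X @ us = P0' \<and> Y = us @ rev L)"
    unfolding append_eq_append_conv2 by blast
  have fs: "fst s = P0 @ L @ [e]" "snd s = v'" unfolding s_def by simp_all
  have cs: "Y = [] \<or> Y = rev L
    \<or> (us \<noteq> [] \<and> X = P0' @ us \<and> us @ Y = rev L \<and> Y \<noteq> [])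
    \<or> (us \<noteq> [] \<and> X @ us = P0' \<and> Y = us @ rev L)"
  proof (cases "us = []")
    case True
    then show ?thesis using us by auto
  next
    case False
    then show ?thesis using us by blast
  qed
  consider (i) "Y = []" | (ii) "Y = rev L"
    | (iii) "us \<noteq> []" "X = P0' @ us" "us @ Y = rev L" "Y \<noteq> []"
    | (iv) "us \<noteq> []" "X @ us = P0'" "Y = us @ rev L"
    using cs by blast
  then show ?thesis
  proof cases
    case i
    then have "X = P0' @ rev L" using XY by simp
    then have "Tr s ((P0 @ L) @ [e], (P0' @ rev L) @ rev [e])"
      using Tr.refl[of s] unfolding s_def v' using i by simp
    then show ?thesis unfolding s_def
      by (intro exI[of _ "P0 @ L"] exI[of _ "P0' @ rev L"] exI[of _ "[e]"]) simp
  next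
    case ii
    then have "X = P0'" using XY by simp
    then have "Tr s (P0 @ (L @ [e]), P0' @ rev (L @ [e]))"
      using Tr.refl[of s] unfolding s_def v' using ii by simp
    then show ?thesis unfolding s_def
      by (intro exI[of _ "P0"] exI[of _ "P0'"] exI[of _ "L @ [e]"]) simp
  next
    case iii
    obtain L1a x where usx: "us = L1a @ [x]"
      by (cases us rule: rev_exhaust) (use iii(1) in auto)
    have "rev L = L1a @ x # Y" using iii(3) usx by simp
    then have "rev (rev L) = rev (L1a @ x # Y)" by (rule arg_cong)
    then have L: "L = rev Y @ x # rev L1a" by simp
    have "Tr s (rev L1a @ e # (P0 @ rev Y) @ x # [], [] @ e # (P0' @ L1a) @ x # Y)"
      by (rule Tr_move[OF Tr.refl]) (simp_all add: fs L v' iii(2) usx)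
    then have "Tr s ((rev L1a @ e # P0) @ (rev Y @ [x]), (e # P0' @ L1a) @ rev (rev Y @ [x]))"
      by simp
    then show ?thesis unfolding s_def
      by (intro exI[of _ "rev L1a @ e # P0"] exI[of _ "e # P0' @ L1a"] exI[of _ "rev Y @ [x]"]) simp
  next
    case iv
    then obtain x us' where usx: "us = x # us'" by (cases us) auto
    have "x \<in> set (X @ us)" unfolding usx by simp
    then have "x \<in> set P0'" unfolding iv(2) .
    then have "x \<in> set P0" unfolding sP .
    then obtain A B where P0: "P0 = A @ x # B" by (meson split_list)
    obtain r Lt where L: "L = r # Lt" using Lne by (cases L) auto
    show ?thesis
    proof (cases Lt)
      case Nil
      have "Tr s (B @ r # A @ x # [e], us' @ r # (X @ [e]) @ x # [])"
        by (rule Tr_move[OF Tr.refl]) (simp_all add: fs L v' iv(3) usx P0 Nil)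
      then have "Tr s ((B @ r # A) @ [x, e], (us' @ r # X) @ rev [x, e])" by simp
      then show ?thesis unfolding s_def
        by (intro exI[of _ "B @ r # A"] exI[of _ "us' @ r # X"] exI[of _ "[x, e]"]) simp
    next
      case (Cons s1 L'')
      have t1: "Tr s (B @ r # A @ x # (s1 # L'' @ [e]),
          (us' @ rev L'' @ [s1]) @ r # (X @ [e]) @ x # [])"
        by (rule Tr_move[OF Tr.refl]) (simp_all add: fs L v' iv(3) usx P0 Cons)
      have "Tr s (L'' @ e # (B @ r # A @ [x]) @ s1 # [], (r # X) @ e # (us' @ rev L'') @ s1 # [x])"
        by (rule Tr_move[OF t1]) simp_all
      then have "Tr s ((L'' @ e # B @ r # A) @ [x, s1], (r # X @ e # us' @ rev L'') @ rev [x, s1])"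
        by simp
      then show ?thesis unfolding s_def
        by (intro exI[of _ "L'' @ e # B @ r # A"] exI[of _ "r # X @ e # us' @ rev L''"] exI[of _ "[x, s1]"]) simp
    qed
  qed
qed

definition Q :: "'a list \<Rightarrow> 'a list \<Rightarrow> bool" where
  "Q v v' \<longleftrightarrow> (\<exists>Bs. (\<forall>B\<in>set Bs. B \<noteq> []) \<and> v = concat Bs \<and> v' = concat (map rev Bs))"

lemma comb:
  "distinct w \<Longrightarrow> distinct w' \<Longrightarrow> set w = set w' \<Longrightarrow> \<exists>t. Tr (w, w') t \<and> Q (fst t) (snd t)"
proof (induction "length w" arbitrary: w w' rule: less_induct)
  case less
  show ?case
  proof (cases w rule: rev_exhaust)
    case Nil
    then have "w' = []" using less.prems by simp
    moreover have "Q [] []" unfolding Q_def by (rule exI[of _ "[]"]) simp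
    ultimately show ?thesis using Nil Tr.refl[of "([], [])"]
      by (intro exI[of _ "([], [])"]) auto
  next
    case (snoc w0 e)
    define w0' where "w0' = filter (\<lambda>z. z \<noteq> e) w'"
    have dw0: "distinct w0" "e \<notin> set w0" using less.prems(1) snoc by auto
    have dw0': "distinct w0'" unfolding w0'_def using less.prems(2) by simp
    have sw0: "set w0 = set w0'" unfolding w0'_def using less.prems(3) snoc dw0(2) by auto
    have "length w0 < length w" using snoc by simp
    then obtain t0 where t0: "Tr (w0, w0') t0" "Q (fst t0) (snd t0)"
      using less.hyps dw0(1) dw0' sw0 by blast
    obtain v' where v': "Tr (w0 @ [e], w') (fst t0 @ [e], v')" "filter (\<lambda>z. z \<noteq> e) v' = snd t0"
      using Tr_del[OF t0(1) w0'_def[symmetric]] by blast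
    have m1: "mset (fst t0 @ [e]) = mset w" "mset v' = mset w'"
      using Tr_mset[OF v'(1)] snoc by auto
    have dt: "distinct (fst t0 @ [e])" using m1(1) less.prems(1) by (metis mset_eq_imp_distinct_iff)
    have dv': "distinct v'" using m1(2) less.prems(2) by (metis mset_eq_imp_distinct_iff)
    have sv': "set v' = set (fst t0 @ [e])"
      using m1 less.prems(3) by (metis mset_eq_setD)
    obtain Bs where Bs: "\<forall>B\<in>set Bs. B \<noteq> []" "fst t0 = concat Bs" "snd t0 = concat (map rev Bs)"
      using t0(2) unfolding Q_def by blast
    have good: "\<exists>P P' S. S \<noteq> [] \<and> Tr (w, w') (P @ S, P' @ rev S)"
    proof (cases Bs rule: rev_exhaust)
      case Nil
      then have "fst t0 = []" using Bs by simp
      then have sv1: "set v' = {e}" using sv' by simp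
      then have "length v' = 1" using distinct_card[OF dv'] by simp
      then obtain x where "v' = [x]" by (cases v') auto
      then have "v' = [e]" using sv1 by simp
      then have "Tr (w, w') ([] @ [e], [] @ rev [e])" using v'(1) \<open>fst t0 = []\<close> snoc by simp
      then show ?thesis by blast
    next
      case (snoc Bs0 L)
      have Lne: "L \<noteq> []" using Bs(1) snoc by simp
      have f0: "fst t0 = concat Bs0 @ L" "snd t0 = concat (map rev Bs0) @ rev L"
        using Bs snoc by simp_all
      have sP: "set (concat Bs0) = set (concat (map rev Bs0))" by simp
      obtain P P' S where PS: "S \<noteq> []" "Tr (concat Bs0 @ L @ [e], v') (P @ S, P' @ rev S)"
        using good_step[of "concat Bs0" L e v' "concat (map rev Bs0)", OF _ dv' _ _ Lne sP]
          dt sv' v'(2) f0 by auto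
      have "Tr (w, w') (P @ S, P' @ rev S)"
        using Tr_trans[OF PS(2)] v'(1) f0 \<open>w = w0 @ [e]\<close> by simp
      then show ?thesis using PS(1) by blast
    qed
    then obtain P P' S where PS: "S \<noteq> []" "Tr (w, w') (P @ S, P' @ rev S)" by blast
    have m2: "mset (P @ S) = mset w" "mset (P' @ rev S) = mset w'" using Tr_mset[OF PS(2)] by auto
    have d2: "distinct (P @ S)" "distinct (P' @ rev S)"
      using m2 less.prems(1,2) by (metis mset_eq_imp_distinct_iff)+
    have s2: "set (P @ S) = set w" "set (P' @ rev S) = set w'" using m2 by (metis mset_eq_setD)+
    have dP: "distinct P" "distinct P'" using d2 by auto
    have sPP: "set P = set P'" using d2 s2 less.prems(3) by auto
    have "length (P @ S) = length w" using m2(1) by (metis size_mset)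
    then have "length P < length w" using PS(1) by (cases S) auto
    then obtain t1 where t1: "Tr (P, P') t1" "Q (fst t1) (snd t1)"
      using less.hyps dP sPP by blast
    obtain Bs1 where Bs1: "\<forall>B\<in>set Bs1. B \<noteq> []" "fst t1 = concat Bs1" "snd t1 = concat (map rev Bs1)"
      using t1(2) unfolding Q_def by blast
    have "Tr (w, w') (fst t1 @ S, snd t1 @ rev S)"
      using Tr_trans[OF Tr_suffix[OF t1(1)] PS(2)] .
    moreover have "Q (fst t1 @ S) (snd t1 @ rev S)" unfolding Q_def
      using Bs1 PS(1) by (intro exI[of _ "Bs1 @ [S]"]) simp
    ultimately show ?thesis by (intro exI[of _ "(fst t1 @ S, snd t1 @ rev S)"]) simp
  qed
qed


section \<open>From lists back to pairs\<close>

lemma list_of: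
  fixes f :: "'a::finite \<Rightarrow> nat"
  assumes bij: "bij_betw f UNIV {1..CARD('a)}"
  shows "\<exists>L. wfl L \<and> pos L = f"
proof -
  define n where "n = CARD('a)"
  define L where "L = map (inv f) [1..<Suc n]"
  have ib: "bij_betw (inv f) {1..n} UNIV" using bij_betw_inv_into[OF bij] unfolding n_def by simp
  have injf: "inj f" using bij unfolding bij_betw_def by simp
  have e: "set [1..<Suc n] = {1..n}" by auto
  have dL: "distinct L" unfolding L_def distinct_map e using ib
    by (simp add: bij_betw_def)
  have sL: "set L = UNIV" unfolding L_def set_map e using ib
    by (simp add: bij_betw_def)
  have lL: "length L = n" unfolding L_def by simp
  have fr: "f b \<in> {1..n}" for b using bij unfolding bij_betw_def n_def by auto
  have "pos L b = f b" for b
  proof -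
    have i: "f b - 1 < length L" using fr[of b] lL by auto
    have u: "[1..<Suc n] ! (f b - 1) = f b" using fr[of b] by (subst nth_upt) auto
    have "L ! (f b - 1) = inv f ([1..<Suc n] ! (f b - 1))" unfolding L_def
      using i lL by (simp only: L_def length_map nth_map)
    then have "L ! (f b - 1) = inv f (f b)" using u by simp
    also have "\<dots> = b" using injf by simp
    finally have "idx L b = f b - 1" using idx_nth[OF dL i] by simp
    then show ?thesis unfolding pos_def using fr[of b] by simp
  qed
  then show ?thesis using dL sL unfolding wfl_def by (intro exI[of _ L]) auto
qed

lemma irr_list:
  assumes "irreducible (pos L0, pos L1)" "wfl L0" "wfl L1"
  shows "irrL L0 L1"
  unfolding irrL_def
proof (intro allI impI)
  fix k assume k: "1 \<le> k \<and> k < length L0"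
  have "length L0 = CARD('a)" "length L1 = CARD('a)" using assms(2,3) wfl_length by auto
  then have "pos L0 -` {1..k} = set (take k L0)" "pos L1 -` {1..k} = set (take k L1)"
    using pos_preimage[OF assms(2)] pos_preimage[OF assms(3)] k by auto
  moreover have "pos L0 -` {1..k} \<noteq> pos L1 -` {1..k}"
    using assms(1) k \<open>length L0 = CARD('a)\<close> unfolding irreducible_def by simp
  ultimately show "set (take k L0) \<noteq> set (take k L1)" by simp
qed

lemma pos_block:
  assumes d: "distinct ((x # T) @ B @ E)" and b: "b \<in> set B"
  shows "pos ((x # T) @ B @ E) b = 2 + length T + idx B b"
proof -
  have "b \<notin> set (x # T)" using d b by auto
  then have "x \<noteq> b" "b \<notin> set T" by auto
  then show ?thesis unfolding pos_def using b by (simp add: idx_append)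
qed

lemma pos_block_iff:
  assumes d: "distinct ((x # T) @ B @ E)"
  shows "(2 + length T \<le> pos ((x # T) @ B @ E) b \<and> pos ((x # T) @ B @ E) b < 2 + length T + length B)
    \<longleftrightarrow> b \<in> set B"
proof (cases "b \<in> set (x # T)")
  case True
  then have "b \<notin> set B" using d by auto
  moreover have "idx (x # T) b < Suc (length T)" using idx_less[OF True] by (simp del: idx.simps)
  moreover have "pos ((x # T) @ B @ E) b = Suc (idx (x # T) b)"
    using idx_append[of "x # T" "B @ E" b] True unfolding pos_def by (simp del: idx.simps)
  ultimately show ?thesis by (simp del: idx.simps)
next
  case False
  show ?thesis
  proof (cases "b \<in> set B")
    case True
    then show ?thesis using pos_block[OF d True] idx_less[OF True] by simp
  next
    case False2: False
    then show ?thesis using False unfolding pos_def by (simp add: idx_append)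
  qed
qed

lemma length_concat_rev: "length (concat (map rev Bs)) = length (concat Bs)"
  by (induction Bs) auto

lemma pwr_final:
  fixes a c :: "'a::finite"
  assumes w0: "wfl (a # concat Bs @ [c])" and w1: "wfl (c # concat (map rev Bs) @ [a])"
    and ne: "\<forall>B\<in>set Bs. B \<noteq> []"
  shows "piecewise_order_reversing (pos (a # concat Bs @ [c]), pos (c # concat (map rev Bs) @ [a]))"
proof -
  define L0 where "L0 = a # concat Bs @ [c]"
  define L1 where "L1 = c # concat (map rev Bs) @ [a]"
  have n0: "length L0 = CARD('a)" using wfl_length[OF w0] unfolding L0_def .
  have n1: "length L1 = CARD('a)" using wfl_length[OF w1] unfolding L1_def .
  have nn: "CARD('a) = 2 + length (concat Bs)" using n0 unfolding L0_def by simp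
  have d0: "distinct L0" and d1: "distinct L1" using w0 w1 unfolding wfl_def L0_def L1_def by auto
  have std: "standard (pos L0, pos L1)"
  proof -
    have "inv (pos L0) 1 = a" using inv_pos[OF w0[folded L0_def], of 1] n0 nn unfolding L0_def by simp
    moreover have "inv (pos L1) CARD('a) = a"
      using inv_pos[OF w1[folded L1_def], of "CARD('a)"] n1 nn unfolding L1_def
      by (simp add: nth_append length_concat_rev)
    moreover have "inv (pos L1) 1 = c" using inv_pos[OF w1[folded L1_def], of 1] n1 nn unfolding L1_def by simp
    moreover have "inv (pos L0) CARD('a) = c"
      using inv_pos[OF w0[folded L0_def], of "CARD('a)"] n0 nn unfolding L0_def
      by (simp add: nth_append)
    ultimately show ?thesis unfolding standard_def by simp
  qed
  define k where "k j = 2 + length (concat (take j Bs))" for j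
  define l where "l = length Bs"
  have k0: "k 0 = 2" unfolding k_def by simp
  have kl: "k l = CARD('a)" unfolding k_def l_def nn by simp
  have kS: "k (Suc j) = k j + length (Bs ! j)" if "j < l" for j
    using that unfolding k_def l_def by (simp add: take_Suc_conv_app_nth)
  have kmono: "\<forall>i<l. k i < k (Suc i)"
  proof (intro allI impI)
    fix i assume "i < l"
    then have "Bs ! i \<noteq> []" using ne unfolding l_def by simp
    then show "k i < k (Suc i)" using kS[OF \<open>i < l\<close>] by simp
  qed
  have blocks: "pos L0 -` {k (i-1)..<k i} = pos L1 -` {k (i-1)..<k i} \<and>
           (\<forall>b. k (i-1) \<le> pos L0 b \<and> pos L0 b < k i \<longrightarrow> pos L0 b + pos L1 b = k (i-1) + k i - 1)"
    if i: "1 \<le> i" "i \<le> l" for i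
  proof -
    define j where "j = i - 1"
    have j: "j < l" "i = Suc j" using i unfolding j_def by auto
    define T where "T = concat (take j Bs)"
    define B where "B = Bs ! j"
    define D where "D = concat (drop (Suc j) Bs)"
    define T' where "T' = concat (map rev (take j Bs))"
    define D' where "D' = concat (map rev (drop (Suc j) Bs))"
    have Bs: "Bs = take j Bs @ B # drop (Suc j) Bs" unfolding B_def using j(1) l_def
      by (simp add: id_take_nth_drop)
    have L0e: "L0 = (a # T) @ B @ (D @ [c])" unfolding L0_def T_def D_def
      by (subst Bs) simp
    have L1e: "L1 = (c # T') @ rev B @ (D' @ [a])" unfolding L1_def T'_def D'_def
      by (subst Bs) simp
    have lT: "length T' = length T" unfolding T_def T'_def by (rule length_concat_rev)
    have kj: "k j = 2 + length T" unfolding k_def T_def ..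
    have kj1: "k i = 2 + length T + length B" unfolding j(2) kS[OF j(1)] kj B_def ..
    have dd0: "distinct ((a # T) @ B @ (D @ [c]))" using d0 L0e by simp
    have dd1: "distinct ((c # T') @ rev B @ (D' @ [a]))" using d1 L1e by simp
    have c0: "k j \<le> pos L0 b \<and> pos L0 b < k i \<longleftrightarrow> b \<in> set B" for b
      unfolding L0e kj kj1 by (rule pos_block_iff[OF dd0])
    have c1: "k j \<le> pos L1 b \<and> pos L1 b < k i \<longleftrightarrow> b \<in> set B" for b
      unfolding L1e kj kj1 using pos_block_iff[OF dd1, of b] lT by simp
    have sum: "pos L0 b + pos L1 b = k j + k i - 1" if b: "b \<in> set B" for b
    proof -
      have db: "distinct B" using dd0 by simp
      have "pos L0 b = 2 + length T + idx B b" unfolding L0e by (rule pos_block[OF dd0 b])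
      moreover have "pos L1 b = 2 + length T + idx (rev B) b" unfolding L1e
        using pos_block[OF dd1, of b] b lT by simp
      moreover have "idx (rev B) b = length B - 1 - idx B b" by (rule idx_rev[OF db b])
      moreover have "idx B b < length B" by (rule idx_less[OF b])
      ultimately show ?thesis unfolding kj kj1 by simp
    qed
    show ?thesis unfolding j_def[symmetric] using c0 c1 sum by auto
  qed
  have "piecewise_order_reversing (pos L0, pos L1)"
    unfolding piecewise_order_reversing_def using std k0 kl kmono blocks
    by (intro conjI exI[of _ l] exI[of _ k]) auto
  then show ?thesis unfolding L0_def L1_def .
qed

theorem theorem3p1:
  fixes p :: "('a::finite) pair"
  assumes "CARD('a) \<ge> 2"
    and "irreducible p"
  shows "\<exists>q \<in> rauzy_class p. piecewise_order_reversing q"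
proof -
  have ip: "is_pair p" using assms(2) unfolding irreducible_def by simp
  obtain L0 where L0: "wfl L0" "pos L0 = fst p"
    using list_of[of "fst p"] ip unfolding is_pair_def by blast
  obtain L1 where L1: "wfl L1" "pos L1 = snd p"
    using list_of[of "snd p"] ip unfolding is_pair_def by blast
  have pe: "p = (pos L0, pos L1)" using L0 L1 by simp
  have irr: "irrL L0 L1" using irr_list[OF _ L0(1) L1(1)] assms(2) pe by simp
  have "R p L0 L1" unfolding R_def using rauzy_class.base[of p] pe by simp
  then obtain a c w w' where st: "R p (a # w @ [c]) (c # w' @ [a])" "wfl (a # w @ [c])"
    "wfl (c # w' @ [a])"
    using std_reach[OF assms(1) L0(1) L1(1) irr] by blast
  have dw: "distinct w" "distinct w'" using st(2,3) unfolding wfl_def by auto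
  have sw: "set w = set w'"
  proof -
    have "set (a # w @ [c]) = set (c # w' @ [a])" using st(2,3) unfolding wfl_def by simp
    moreover have "a \<notin> set w" "c \<notin> set w" "a \<notin> set w'" "c \<notin> set w'"
      using st(2,3) unfolding wfl_def by auto
    ultimately show ?thesis by auto
  qed
  obtain t where t: "Tr (w, w') t" "Q (fst t) (snd t)" using comb[OF dw sw] by blast
  have lift: "R p (a # fst t @ [c]) (c # snd t @ [a])" "wfl (a # fst t @ [c])" "wfl (c # snd t @ [a])"
    using Tr_lift[OF t(1) st] by auto
  obtain Bs where Bs: "\<forall>B\<in>set Bs. B \<noteq> []" "fst t = concat Bs" "snd t = concat (map rev Bs)"
    using t(2) unfolding Q_def by blast
  have "piecewise_order_reversing (pos (a # fst t @ [c]), pos (c # snd t @ [a]))"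
    using pwr_final[of a Bs c] lift(2,3) Bs by simp
  moreover have "(pos (a # fst t @ [c]), pos (c # snd t @ [a])) \<in> rauzy_class p"
    using lift(1) unfolding R_def .
  ultimately show ?thesis by blast
qed

end
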